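(* Let $\gamma:[0,1]\to\mathbb T^2$ be an arc-length parametrized unit length curve with curvature bounded below by a positive constant. For a positive integer $m$ let $\lambda=2\pi\sqrt m$, $\mathcal E_\lambda=\{\mu\in\mathbb Z^2:\|\mu\|^2=m\}$, $N=|\mathcal E_\lambda|$, and let $\Phi(x)=\sum_{\mu\in\mathcal E_\lambda}a_\mu e^{2\pi i\langle\mu,x\rangle}$ with $\sum_\mu|a_\mu|^2=1$. Suppose $\lambda$ satisfies $\min_{\mu_1\ne\mu_2\in\mathcal E_\lambda}\|\mu_1-\mu_2\|\gg\lambda/\log^{3/2+\varepsilon}\lambda$ for some $\varepsilon>0$, and let $I\subset[0,1]$ be an interval with $|I|>\lambda^{-1/2}(\log\lambda)^{3/4+\varepsilon}N$. Then $$\frac1{|I|}\int_I|\Phi(\gamma(t))|^2\,dt\ge\frac12.$$ *)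

theory Defs
  imports "HOL-Analysis.Analysis"
begin

text \<open>Points of R^2 (lifts of points of the torus T^2 = R^2/Z^2) are pairs of reals;
  lattice points are pairs of integers.\<close>

definition lat_inner :: "int \<times> int \<Rightarrow> real \<times> real \<Rightarrow> real" where
  "lat_inner mu x = real_of_int (fst mu) * fst x + real_of_int (snd mu) * snd x"

definition lat_normsq :: "int \<times> int \<Rightarrow> int" where
  "lat_normsq mu = (fst mu)^2 + (snd mu)^2"

definition lat_dist :: "int \<times> int \<Rightarrow> int \<times> int \<Rightarrow> real" where
  "lat_dist mu nu = sqrt (real_of_int ((fst mu - fst nu)^2 + (snd mu - snd nu)^2))"

definition Elam :: "nat \<Rightarrow> (int \<times> int) set" where
  "Elam m = {mu. lat_normsq mu = int m}"

definition lam :: "nat \<Rightarrow> real" where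
  "lam m = 2 * pi * sqrt (real m)"

definition Phi :: "nat \<Rightarrow> (int \<times> int \<Rightarrow> complex) \<Rightarrow> real \<times> real \<Rightarrow> complex" where
  "Phi m a x = (\<Sum>mu\<in>Elam m. a mu * exp (2 * of_real pi * \<i> * of_real (lat_inner mu x)))"

text \<open>A smooth curve on [0,1]: D 0 = gamma and each D k has derivative D (Suc k) on [0,1];
  unit speed (arc-length parametrization) and curvature |gamma''| bounded below by kappa > 0.\<close>
definition smooth_unit_speed_curved ::
    "(real \<Rightarrow> real \<times> real) \<Rightarrow> real \<Rightarrow> bool" where
  "smooth_unit_speed_curved g kappa \<longleftrightarrow>
     kappa > 0 \<and>
     (\<exists>D :: nat \<Rightarrow> real \<Rightarrow> real \<times> real.
        D 0 = g \<and>
        (\<forall>k. \<forall>t\<in>{0..1}. (D k has_vector_derivative D (Suc k) t) (at t within {0..1})) \<and>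
        (\<forall>t\<in>{0..1}. norm (D 1 t) = 1) \<and>
        (\<forall>t\<in>{0..1}. norm (D 2 t) \<ge> kappa))"

end

theory Submission
  imports Defs
begin


lemma ibp_bound:
  fixes \<phi> f f2 :: "real \<Rightarrow> real"
  assumes ab: "a \<le> b"
   and dphi: "\<And>x. x \<in> {a..b} \<Longrightarrow> (\<phi> has_real_derivative f x) (at x within {a..b})"
   and df: "\<And>x. x \<in> {a..b} \<Longrightarrow> (f has_real_derivative f2 x) (at x within {a..b})"
   and cf2: "continuous_on {a..b} f2"
   and nz: "\<And>x. x \<in> {a..b} \<Longrightarrow> f x \<noteq> 0"
  shows "norm (integral {a..b} (\<lambda>x. exp (\<i> * of_real (\<phi> x))))
     \<le> 1/\<bar>f a\<bar> + 1/\<bar>f b\<bar> + integral {a..b} (\<lambda>x. \<bar>f2 x\<bar> / (f x)^2)"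
proof -
  define E where "E x = exp (\<i> * of_real (\<phi> x))" for x
  define F where "F x = - \<i> * E x * of_real (1 / f x)" for x
  define G where "G x = \<i> * E x * of_real (f2 x / (f x)^2)" for x
  have cphi: "continuous_on {a..b} \<phi>" using dphi DERIV_continuous_on by blast
  have cf: "continuous_on {a..b} f" using df DERIV_continuous_on by blast
  have cE: "continuous_on {a..b} E" unfolding E_def
    by (intro continuous_intros cphi)
  have cG: "continuous_on {a..b} G" unfolding G_def
    by (intro continuous_intros cE cf2 cf) (use nz in auto)
  have dE: "(E has_vector_derivative (\<i> * of_real (f x) * E x)) (at x within {a..b})"
    if x: "x \<in> {a..b}" for x
  proof -
    have "((\<lambda>x. \<i> * of_real (\<phi> x)) has_vector_derivative (\<i> * of_real (f x))) (at x within {a..b})"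
      using has_vector_derivative_mult[OF has_vector_derivative_const has_vector_derivative_of_real[OF dphi[OF x]]]
      by simp
    from field_vector_diff_chain_within[OF this DERIV_exp[THEN has_field_derivative_at_within]]
    have "((\<lambda>x. exp (\<i> * of_real (\<phi> x))) has_vector_derivative (\<i> * of_real (f x) * E x)) (at x within {a..b})"
      by (simp add: E_def o_def)
    moreover have "E = (\<lambda>x. exp (\<i> * of_real (\<phi> x)))" by (simp add: E_def fun_eq_iff)
    ultimately show ?thesis by simp
  qed
  have dinv: "((\<lambda>x. 1 / f x) has_real_derivative (- f2 x / (f x)^2)) (at x within {a..b})"
    if x: "x \<in> {a..b}" for x
    using DERIV_inverse_fun[OF df[OF x] nz[OF x]] nz[OF x]
    by (simp add: divide_inverse power2_eq_square)
  have dF: "(F has_vector_derivative (E x + G x)) (at x within {a..b})" if x: "x \<in> {a..b}" for x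
  proof -
    have "(F has_vector_derivative (- \<i> * E x * of_real (- f2 x / (f x)^2) + (- \<i> * (\<i> * of_real (f x) * E x)) * of_real (1 / f x))) (at x within {a..b})"
      unfolding F_def
      by (intro has_vector_derivative_mult has_vector_derivative_of_real dinv x dE
           has_vector_derivative_const[THEN has_vector_derivative_mult[OF _ dE[OF x]], simplified])
    moreover have "- \<i> * E x * of_real (- f2 x / (f x)^2) + (- \<i> * (\<i> * of_real (f x) * E x)) * of_real (1 / f x) = E x + G x"
      using nz[OF x] by (simp add: G_def field_simps)
    ultimately show ?thesis by simp
  qed
  have iFG: "((\<lambda>x. E x + G x) has_integral (F b - F a)) {a..b}"
    by (rule fundamental_theorem_of_calculus[OF ab dF])
  have iG: "(G has_integral integral {a..b} G) {a..b}"
    using cG integrable_continuous_real by blast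
  have iE: "(E has_integral (F b - F a - integral {a..b} G)) {a..b}"
    using has_integral_diff[OF iFG iG] by simp
  have "norm (integral {a..b} E) = norm (F b - F a - integral {a..b} G)"
    using iE by (simp add: integral_unique)
  also have "\<dots> \<le> norm (F b) + norm (F a) + norm (integral {a..b} G)"
    by (smt (verit) norm_triangle_ineq4)
  also have "norm (integral {a..b} G) \<le> integral {a..b} (\<lambda>x. \<bar>f2 x\<bar> / (f x)^2)"
  proof (rule integral_norm_bound_integral)
    show "G integrable_on {a..b}" using iG by blast
    show "(\<lambda>x. \<bar>f2 x\<bar> / (f x)^2) integrable_on {a..b}"
      by (intro integrable_continuous_real continuous_intros cf2 cf) (use nz in auto)
    show "norm (G x) \<le> \<bar>f2 x\<bar> / (f x)^2" if "x \<in> {a..b}" for x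
      by (simp add: G_def E_def norm_mult norm_divide abs_mult norm_power)
  qed
  finally have fin: "norm (integral {a..b} E) \<le> norm (F b) + norm (F a) + integral {a..b} (\<lambda>x. \<bar>f2 x\<bar> / (f x)^2)"
    by simp
  have nF: "norm (F x) = 1 / \<bar>f x\<bar>" for x by (simp add: F_def E_def norm_mult norm_divide)
  have Eeq: "(\<lambda>x. exp (\<i> * of_real (\<phi> x))) = E" by (simp add: E_def fun_eq_iff)
  show ?thesis unfolding Eeq using fin nF[of a] nF[of b] by linarith
qed


lemma inv_le_abs: "1 / (x::real) \<le> 1 / \<bar>x\<bar>"
proof (cases "x < 0")
  case True then have "1 / x < 0" by simp
  then show ?thesis by (smt (verit) zero_le_divide_1_iff)
qed simp

lemma piece_bound:
  fixes \<phi> f f2 :: "real \<Rightarrow> real"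
  assumes ab: "a \<le> b"
   and dphi: "\<And>x. x \<in> {a..b} \<Longrightarrow> (\<phi> has_real_derivative f x) (at x within {a..b})"
   and df: "\<And>x. x \<in> {a..b} \<Longrightarrow> (f has_real_derivative f2 x) (at x within {a..b})"
   and cf2: "continuous_on {a..b} f2"
   and d: "\<delta> > 0"
   and big: "\<And>x. x \<in> {a..b} \<Longrightarrow> \<bar>f x\<bar> \<ge> \<delta>"
   and nn: "\<And>x. x \<in> {a..b} \<Longrightarrow> f2 x \<ge> 0"
  shows "norm (integral {a..b} (\<lambda>x. exp (\<i> * of_real (\<phi> x)))) \<le> 4 / \<delta>"
proof -
  have nz: "\<And>x. x \<in> {a..b} \<Longrightarrow> f x \<noteq> 0" using big d by force
  have I: "norm (integral {a..b} (\<lambda>x. exp (\<i> * of_real (\<phi> x))))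
     \<le> 1/\<bar>f a\<bar> + 1/\<bar>f b\<bar> + integral {a..b} (\<lambda>x. \<bar>f2 x\<bar> / (f x)^2)"
    by (rule ibp_bound[OF ab dphi df cf2 nz])
  have dinv: "((\<lambda>x. - (1 / f x)) has_vector_derivative (f2 x / (f x)^2)) (at x within {a..b})"
    if x: "x \<in> {a..b}" for x
    using DERIV_inverse_fun[OF df[OF x] nz[OF x], THEN DERIV_minus] nz[OF x]
    by (simp add: divide_inverse power2_eq_square has_real_derivative_iff_has_vector_derivative)
  have "((\<lambda>x. f2 x / (f x)^2) has_integral (- (1 / f b) - - (1 / f a))) {a..b}"
    by (rule fundamental_theorem_of_calculus[OF ab dinv])
  then have "integral {a..b} (\<lambda>x. \<bar>f2 x\<bar> / (f x)^2) = 1 / f a - 1 / f b"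
    using nn by (subst integral_cong[where g="\<lambda>x. f2 x / (f x)^2"]) (auto simp: integral_unique)
  also have "\<dots> \<le> 1/\<bar>f a\<bar> + 1/\<bar>f b\<bar>"
    using inv_le_abs[of "f a"] inv_le_abs[of "- f b"] by simp
  finally have I2: "norm (integral {a..b} (\<lambda>x. exp (\<i> * of_real (\<phi> x)))) \<le> 2 * (1/\<bar>f a\<bar> + 1/\<bar>f b\<bar>)"
    using I by argo
  have "1/\<bar>f a\<bar> \<le> 1/\<delta>" "1/\<bar>f b\<bar> \<le> 1/\<delta>"
    using big[of a] big[of b] ab d by (auto intro!: divide_left_mono)
  then show ?thesis using I2 by simp
qed

lemma split_pt:
  fixes f :: "real \<Rightarrow> real"
  assumes ab: "a \<le> b" and cf: "continuous_on {a..b} f"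
    and mono: "\<And>x y. x \<in> {a..b} \<Longrightarrow> y \<in> {a..b} \<Longrightarrow> x \<le> y \<Longrightarrow> f x \<le> f y"
  shows "\<exists>p\<in>{a..b}. (p = a \<or> (\<forall>x\<in>{a..p}. f x \<le> y)) \<and> (p = b \<or> (\<forall>x\<in>{p..b}. f x \<ge> y))"
proof (cases "f a \<ge> y")
  case True
  then show ?thesis using ab mono[of a] by (intro bexI[of _ a]) (auto, fastforce)
next
  case False
  show ?thesis
  proof (cases "f b \<le> y")
    case True
    then show ?thesis using ab mono[of _ b] by (intro bexI[of _ b]) (auto, fastforce)
  next
    case False2: False
    obtain p where p: "a \<le> p" "p \<le> b" "f p = y"
      using IVT'[of f a y b] False False2 ab cf by auto
    show ?thesis
      using p mono[of _ p] mono[of p] by (intro bexI[of _ p]) auto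
  qed
qed

lemma vdc2:
  fixes \<phi> f f2 :: "real \<Rightarrow> real"
  assumes ab: "a \<le> b" and r: "r > 0"
   and dphi: "\<And>x. x \<in> {a..b} \<Longrightarrow> (\<phi> has_real_derivative f x) (at x within {a..b})"
   and df: "\<And>x. x \<in> {a..b} \<Longrightarrow> (f has_real_derivative f2 x) (at x within {a..b})"
   and cf2: "continuous_on {a..b} f2"
   and pos: "\<And>x. x \<in> {a..b} \<Longrightarrow> f2 x \<ge> r"
  shows "norm (integral {a..b} (\<lambda>x. exp (\<i> * of_real (\<phi> x)))) \<le> 10 / sqrt r"
proof -
  define E where "E = (\<lambda>x. exp (\<i> * of_real (\<phi> x)))"
  define \<delta> where "\<delta> = sqrt r"
  have d: "\<delta> > 0" using r by (simp add: \<delta>_def)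
  have dd: "\<delta> * \<delta> = r" using r by (simp add: \<delta>_def)
  have cphi: "continuous_on {a..b} \<phi>" using dphi DERIV_continuous_on by blast
  have cf: "continuous_on {a..b} f" using df DERIV_continuous_on by blast
  have cE: "continuous_on {a..b} E" unfolding E_def by (intro continuous_intros cphi)
  have grow: "f y - f x \<ge> r * (y - x)" if "x \<in> {a..b}" "y \<in> {a..b}" "x \<le> y" for x y
  proof -
    have sub: "{x..y} \<subseteq> {a..b}" using that by auto
    have i1: "(f2 has_integral (f y - f x)) {x..y}"
      using that sub
      by (intro fundamental_theorem_of_calculus)
         (auto intro!: DERIV_subset[OF df] simp: has_real_derivative_iff_has_vector_derivative[symmetric])
    have i2: "((\<lambda>_. r) has_integral (r * (y - x))) {x..y}"
      using has_integral_const_real[of r x y] that by (simp add: mult.commute)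
    have "r * (y - x) \<le> f y - f x"
    proof (rule has_integral_le[OF i2 i1])
      fix z assume "z \<in> {x..y}"
      then show "r \<le> f2 z" using pos sub by blast
    qed
    then show ?thesis by simp
  qed
  have mono: "f x \<le> f y" if "x \<in> {a..b}" "y \<in> {a..b}" "x \<le> y" for x y
  proof -
    have "r * (y - x) \<ge> 0" using r that by simp
    then show ?thesis using grow[OF that] by linarith
  qed
  obtain p where p: "p \<in> {a..b}" "p = a \<or> (\<forall>x\<in>{a..p}. f x \<le> -\<delta>)" "p = b \<or> (\<forall>x\<in>{p..b}. f x \<ge> -\<delta>)"
    using split_pt[OF ab cf mono] by blast
  obtain q where q: "q \<in> {a..b}" "q = a \<or> (\<forall>x\<in>{a..q}. f x \<le> \<delta>)" "q = b \<or> (\<forall>x\<in>{q..b}. f x \<ge> \<delta>)"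
    using split_pt[OF ab cf mono] by blast
  have pq: "p \<le> q"
  proof (rule ccontr)
    assume "\<not> p \<le> q"
    then have "q \<noteq> b" "p \<noteq> a" using p q by auto
    then have "f p \<ge> \<delta>" "f p \<le> -\<delta>" using p q \<open>\<not> p \<le> q\<close> by auto
    then show False using d by simp
  qed
  have len: "q - p \<le> 2 * \<delta> / r"
  proof (cases "p = q")
    case True then show ?thesis using d r by simp
  next
    case False
    then have "p \<noteq> b" "q \<noteq> a" using pq p q by auto
    then have "f p \<ge> -\<delta>" "f q \<le> \<delta>" using p q pq by auto
    moreover have "f q - f p \<ge> r * (q - p)" using grow p q pq by auto
    ultimately have "r * (q - p) \<le> 2 * \<delta>" by simp
    then show ?thesis using r by (simp add: field_simps)
  qed
  have iE: "E integrable_on {a..b}" using cE integrable_continuous_real by blast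
  have iE2: "E integrable_on {p..b}" by (rule integrable_on_subinterval[OF iE]) (use p in auto)
  have split: "integral {a..b} E = integral {a..p} E + integral {p..q} E + integral {q..b} E"
  proof -
    have ap: "a \<le> p" "p \<le> b" "q \<le> b" using p q by auto
    have c1: "integral {a..p} E + integral {p..b} E = integral {a..b} E"
      by (rule Henstock_Kurzweil_Integration.integral_combine[OF ap(1,2) iE])
    have c2: "integral {p..q} E + integral {q..b} E = integral {p..b} E"
      by (rule Henstock_Kurzweil_Integration.integral_combine[OF pq ap(3) iE2])
    show ?thesis using c1 c2 by (simp add: add.assoc)
  qed
  have sub_d: "\<And>u v x. {u..v} \<subseteq> {a..b} \<Longrightarrow> x \<in> {u..v} \<Longrightarrow> (\<phi> has_real_derivative f x) (at x within {u..v})"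
    using dphi DERIV_subset by blast
  have sub_d2: "\<And>u v x. {u..v} \<subseteq> {a..b} \<Longrightarrow> x \<in> {u..v} \<Longrightarrow> (f has_real_derivative f2 x) (at x within {u..v})"
    using df DERIV_subset by blast
  have B1: "norm (integral {a..p} E) \<le> 4 / \<delta>"
  proof (cases "p = a")
    case True then show ?thesis using d by simp
  next
    case False
    have s: "{a..p} \<subseteq> {a..b}" using p by auto
    have pa: "\<forall>x\<in>{a..p}. f x \<le> -\<delta>" using p False by auto
    show ?thesis unfolding E_def
    proof (rule piece_bound[OF _ sub_d[OF s] sub_d2[OF s] continuous_on_subset[OF cf2 s] d])
      show "a \<le> p" using p by auto
      show "\<delta> \<le> \<bar>f x\<bar>" if "x \<in> {a..p}" for x
        using pa that abs_ge_minus_self[of "f x"] by fastforce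
      show "0 \<le> f2 x" if "x \<in> {a..p}" for x
        using pos[of x] that s r by fastforce
    qed
  qed
  have B3: "norm (integral {q..b} E) \<le> 4 / \<delta>"
  proof (cases "q = b")
    case True then show ?thesis using d by simp
  next
    case False
    have s: "{q..b} \<subseteq> {a..b}" using q by auto
    have qa: "\<forall>x\<in>{q..b}. f x \<ge> \<delta>" using q False by auto
    show ?thesis unfolding E_def
    proof (rule piece_bound[OF _ sub_d[OF s] sub_d2[OF s] continuous_on_subset[OF cf2 s] d])
      show "q \<le> b" using q by auto
      show "\<delta> \<le> \<bar>f x\<bar>" if "x \<in> {q..b}" for x
        using qa that abs_ge_self[of "f x"] by fastforce
      show "0 \<le> f2 x" if "x \<in> {q..b}" for x
        using pos[of x] that s r by fastforce
    qed
  qed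
  have B2: "norm (integral {p..q} E) \<le> q - p"
  proof -
    have s: "{p..q} \<subseteq> {a..b}" using p q by auto
    have "norm (integral {p..q} E) \<le> integral {p..q} (\<lambda>_. 1::real)"
    proof (rule integral_norm_bound_integral)
      show "E integrable_on {p..q}" by (rule integrable_on_subinterval[OF iE s])
      show "(\<lambda>_. 1::real) integrable_on {p..q}" by (intro integrable_continuous_real continuous_intros)
      show "norm (E x) \<le> 1" for x by (simp add: E_def)
    qed
    then show ?thesis using pq by simp
  qed
  have "norm (integral {a..b} E) \<le> 4 / \<delta> + 2 * \<delta> / r + 4 / \<delta>"
  proof -
    have "norm (integral {a..b} E) \<le> norm (integral {a..p} E) + norm (integral {p..q} E) + norm (integral {q..b} E)"
      unfolding split by (rule order_trans[OF norm_triangle_ineq add_right_mono[OF norm_triangle_ineq]])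
    then show ?thesis using B1 B2 B3 len by linarith
  qed
  also have "2 * \<delta> / r = 2 / \<delta>" unfolding dd[symmetric] using d by simp
  also have "4 / \<delta> + 2 / \<delta> + 4 / \<delta> = 10 / \<delta>" by (simp add: add_divide_distrib)
  finally have fin2: "norm (integral {a..b} E) \<le> 10 / \<delta>" .
  show ?thesis using fin2 by (simp add: E_def \<delta>_def)
qed


lemma frame_alg:
  fixes u1 u2 a1 a2 c1 c2 k :: real
  assumes n: "a1^2 + a2^2 = 1" and o: "a1*c1 + a2*c2 = 0" and c: "c1^2 + c2^2 \<ge> k^2"
  shows "(u1*a1 + u2*a2)^2 \<ge> (u1^2+u2^2)/2 \<or> (u1*c1 + u2*c2)^2 \<ge> k^2 * (u1^2+u2^2)/2"
proof -
  define t where "t = a1*c2 - a2*c1"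
  have c1: "c1 = - t * a2"
  proof -
    have "c1 = c1 * (a1^2 + a2^2)" using n by simp
    also have "\<dots> = a1 * (a1*c1 + a2*c2) - a2 * t" by (simp add: t_def algebra_simps power2_eq_square)
    finally show ?thesis using o by simp
  qed
  have c2: "c2 = t * a1"
  proof -
    have "c2 = c2 * (a1^2 + a2^2)" using n by simp
    also have "\<dots> = a2 * (a1*c1 + a2*c2) + a1 * t" by (simp add: t_def algebra_simps power2_eq_square)
    finally show ?thesis using o by simp
  qed
  have tt0: "c1^2 + c2^2 = t^2 * (a1^2 + a2^2)" unfolding c1 c2 by (simp add: algebra_simps power2_eq_square)
  have tt: "t^2 = c1^2 + c2^2" using tt0 n by simp
  have sum0: "(u1*a1 + u2*a2)^2 + (u2*a1 - u1*a2)^2 = (u1^2 + u2^2) * (a1^2 + a2^2)"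
    by (simp add: algebra_simps power2_eq_square)
  have sum: "(u1*a1 + u2*a2)^2 + (u2*a1 - u1*a2)^2 = u1^2 + u2^2" using sum0 n by simp
  have ic: "(u1*c1 + u2*c2)^2 = t^2 * (u2*a1 - u1*a2)^2"
    unfolding c1 c2 by (simp add: algebra_simps power2_eq_square)
  show ?thesis
  proof (cases "(u1*a1 + u2*a2)^2 \<ge> (u1^2+u2^2)/2")
    case False
    have aux: "\<And>P Q S::real. \<not> S/2 \<le> P \<Longrightarrow> P + Q = S \<Longrightarrow> S/2 \<le> Q" by linarith
    have "(u2*a1 - u1*a2)^2 \<ge> (u1^2+u2^2)/2" by (rule aux[OF False sum])
    moreover have "t^2 \<ge> k^2" using tt c by simp
    ultimately have "t^2 * (u2*a1 - u1*a2)^2 \<ge> k^2 * ((u1^2+u2^2)/2)"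
      by (intro mult_mono) auto
    then show ?thesis using ic by simp
  qed simp
qed

lemma frame:
  fixes u a c :: "real \<times> real" and k :: real
  assumes "norm a = 1" "inner a c = 0" "norm c \<ge> k" "k \<ge> 0"
  shows "(inner u a)^2 \<ge> (norm u)^2/2 \<or> (inner u c)^2 \<ge> k^2 * (norm u)^2/2"
proof -
  obtain u1 u2 where u: "u = (u1,u2)" by (cases u)
  obtain a1 a2 where a: "a = (a1,a2)" by (cases a)
  obtain c1 c2 where c: "c = (c1,c2)" by (cases c)
  have "a1^2 + a2^2 = 1" using assms(1) unfolding a norm_Pair by simp
  moreover have "a1*c1 + a2*c2 = 0" using assms(2) unfolding a c by simp
  moreover have "c1^2 + c2^2 \<ge> k^2"
  proof -
    have "k^2 \<le> (norm c)^2" using assms(3,4) by (simp add: power_mono)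
    then show ?thesis unfolding c norm_Pair by simp
  qed
  ultimately have "(u1*a1 + u2*a2)^2 \<ge> (u1^2+u2^2)/2 \<or> (u1*c1 + u2*c2)^2 \<ge> k^2 * (u1^2+u2^2)/2"
    by (rule frame_alg)
  then show ?thesis unfolding u a c norm_Pair by simp
qed


lemma local_bound:
  fixes g D1 D2 :: "real \<Rightarrow> real \<times> real" and \<xi> :: "real \<times> real"
  assumes dg: "\<And>x. x \<in> {0..1} \<Longrightarrow> (g has_vector_derivative D1 x) (at x within {0..1})"
    and dD1: "\<And>x. x \<in> {0..1} \<Longrightarrow> (D1 has_vector_derivative D2 x) (at x within {0..1})"
    and cD2: "continuous_on {0..1} D2"
    and unit: "\<And>x. x \<in> {0..1} \<Longrightarrow> norm (D1 x) = 1"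
    and orth: "\<And>x. x \<in> {0..1} \<Longrightarrow> inner (D1 x) (D2 x) = 0"
    and k: "\<kappa> > 0" and curv: "\<And>x. x \<in> {0..1} \<Longrightarrow> norm (D2 x) \<ge> \<kappa>"
    and K2: "\<And>x. x \<in> {0..1} \<Longrightarrow> norm (D2 x) \<le> K2"
    and ab: "0 \<le> a" "a \<le> b" "b \<le> 1"
    and uc1: "\<And>x. x \<in> {a..b} \<Longrightarrow> norm (D1 x - D1 a) \<le> 1/5"
    and uc2: "\<And>x. x \<in> {a..b} \<Longrightarrow> norm (D2 x - D2 a) \<le> \<kappa>/5"
    and R1: "norm \<xi> \<ge> 1"
  shows "norm (integral {a..b} (\<lambda>x. exp (\<i> * of_real (inner \<xi> (g x)))))
           \<le> (4 + 4 * K2 + 10 * sqrt (2 / \<kappa>)) / sqrt (norm \<xi>)"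
proof -
  define R where "R = norm \<xi>"
  have R0: "R > 0" "R \<ge> 1" using R1 by (auto simp: R_def)
  have sub: "{a..b} \<subseteq> {0..1}" using ab by auto
  have K2nn: "K2 \<ge> 0"
  proof -
    have "norm (D2 0) \<le> K2" using K2[of 0] by simp
    then show ?thesis using norm_ge_zero[of "D2 0"] by linarith
  qed
  define f where "f x = inner \<xi> (D1 x)" for x
  define f2 where "f2 x = inner \<xi> (D2 x)" for x
  have dpsi: "((\<lambda>x. inner \<xi> (g x)) has_real_derivative f x) (at x within {a..b})" if "x \<in> {a..b}" for x
    unfolding has_real_derivative_iff_has_vector_derivative f_def
    by (rule bounded_linear.has_vector_derivative[OF bounded_linear_inner_right])
       (rule has_vector_derivative_within_subset[OF dg sub], use that sub in auto)
  have df: "(f has_real_derivative f2 x) (at x within {a..b})" if "x \<in> {a..b}" for x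
    unfolding has_real_derivative_iff_has_vector_derivative f_def f2_def
    by (rule bounded_linear.has_vector_derivative[OF bounded_linear_inner_right])
       (rule has_vector_derivative_within_subset[OF dD1 sub], use that sub in auto)
  have cf2: "continuous_on {a..b} f2" unfolding f2_def
    by (intro continuous_intros continuous_on_subset[OF cD2 sub])
  have cf: "continuous_on {a..b} f" using df DERIV_continuous_on by blast
  have near1: "\<bar>f x - f a\<bar> \<le> R/5" if "x \<in> {a..b}" for x
  proof -
    have "\<bar>f x - f a\<bar> = \<bar>inner \<xi> (D1 x - D1 a)\<bar>" by (simp add: f_def inner_diff_right)
    also have "\<dots> \<le> R * norm (D1 x - D1 a)" unfolding R_def by (rule Cauchy_Schwarz_ineq2)
    also have "\<dots> \<le> R * (1/5)" using uc1[OF that] R0 by (intro mult_left_mono) auto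
    finally show ?thesis by simp
  qed
  have near2: "\<bar>f2 x - f2 a\<bar> \<le> R * \<kappa>/5" if "x \<in> {a..b}" for x
  proof -
    have "\<bar>f2 x - f2 a\<bar> = \<bar>inner \<xi> (D2 x - D2 a)\<bar>" by (simp add: f2_def inner_diff_right)
    also have "\<dots> \<le> R * norm (D2 x - D2 a)" unfolding R_def by (rule Cauchy_Schwarz_ineq2)
    also have "\<dots> \<le> R * (\<kappa>/5)" using uc2[OF that] R0 by (intro mult_left_mono) auto
    finally show ?thesis by simp
  qed
  have a01: "a \<in> {0..1}" using ab by auto
  have fr: "(f a)^2 \<ge> R^2/2 \<or> (f2 a)^2 \<ge> \<kappa>^2 * R^2/2"
    unfolding f_def f2_def R_def
    using frame[OF unit[OF a01] orth[OF a01] curv[OF a01]] k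
    by (simp add: inner_commute)
  have sqrtR: "sqrt R \<le> R"
  proof -
    have s1: "1 \<le> sqrt R" using R0 by simp
    have "sqrt R * 1 \<le> sqrt R * sqrt R" using s1 by (intro mult_left_mono) auto
    then show ?thesis using R0 by simp
  qed
  have sqrtR0: "sqrt R > 0" using R0 by simp
  show ?thesis
  proof (cases "(f a)^2 \<ge> R^2/2")
    case True
    have "(7/10 * R)^2 = 49/100 * R^2" by (simp add: power2_eq_square)
    then have "(7/10 * R)^2 \<le> (f a)^2" using True zero_le_power2[of R] by linarith
    then have fa: "\<bar>f a\<bar> \<ge> 7/10 * R" using R0
      by (metis abs_of_nonneg power2_le_imp_le abs_ge_zero power2_abs mult_nonneg_nonneg less_imp_le zero_le_divide_iff zero_le_numeral)
    have fbig: "\<bar>f x\<bar> \<ge> R/2" if "x \<in> {a..b}" for x using near1[OF that] fa by linarith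
    have nz: "f x \<noteq> 0" if "x \<in> {a..b}" for x using fbig[OF that] R0 by force
    have I: "norm (integral {a..b} (\<lambda>x. exp (\<i> * of_real (inner \<xi> (g x)))))
       \<le> 1/\<bar>f a\<bar> + 1/\<bar>f b\<bar> + integral {a..b} (\<lambda>x. \<bar>f2 x\<bar> / (f x)^2)"
      by (rule ibp_bound[OF ab(2) dpsi df cf2 nz])
    have inv: "1/\<bar>f x\<bar> \<le> 2/R" if "x \<in> {a..b}" for x
      using fbig[OF that] R0 by (simp add: field_simps)
    have f2b: "\<bar>f2 x\<bar> \<le> R * K2" if "x \<in> {a..b}" for x
    proof -
      have "\<bar>f2 x\<bar> \<le> R * norm (D2 x)" unfolding f2_def R_def by (rule Cauchy_Schwarz_ineq2)
      also have "\<dots> \<le> R * K2" using K2[of x] that sub R0 by (intro mult_left_mono) auto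
      finally show ?thesis .
    qed
    have "integral {a..b} (\<lambda>x. \<bar>f2 x\<bar> / (f x)^2) \<le> integral {a..b} (\<lambda>x. 4 * K2 / R)"
    proof (rule integral_le)
      show "(\<lambda>x. \<bar>f2 x\<bar> / (f x)^2) integrable_on {a..b}"
        by (intro integrable_continuous_real continuous_intros cf2 cf) (use nz in auto)
      show "(\<lambda>x. 4 * K2 / R) integrable_on {a..b}" by (intro integrable_continuous_real continuous_intros)
      show "\<bar>f2 x\<bar> / (f x)^2 \<le> 4 * K2 / R" if "x \<in> {a..b}" for x
      proof -
        have "(R/2)^2 \<le> (f x)^2" using fbig[OF that] R0
          by (metis abs_of_nonneg power2_abs power_mono less_imp_le half_gt_zero)
        then have "R^2/4 \<le> (f x)^2" by (simp add: power_divide)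
        moreover have "R^2/4 > 0" using R0 by simp
        ultimately have "\<bar>f2 x\<bar> / (f x)^2 \<le> (R * K2) / (R^2/4)"
          using f2b[OF that] K2nn R0 by (intro frac_le) auto
        also have "\<dots> = 4 * K2 / R" using R0 by (simp add: field_simps power2_eq_square)
        finally show ?thesis .
      qed
    qed
    also have "\<dots> = (b - a) * (4 * K2 / R)" using ab by simp
    also have "\<dots> \<le> 4 * K2 / R"
      using ab K2nn R0 by (intro mult_left_le_one_le) auto
    finally have "norm (integral {a..b} (\<lambda>x. exp (\<i> * of_real (inner \<xi> (g x)))))
       \<le> 2/R + 2/R + 4 * K2 / R"
      using I inv[of a] inv[of b] ab by auto
    also have "\<dots> = (4 + 4 * K2) / R" by (simp add: add_divide_distrib)
    also have "\<dots> \<le> (4 + 4 * K2) / sqrt R"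
      using sqrtR sqrtR0 K2nn by (intro divide_left_mono) auto
    also have "\<dots> \<le> (4 + 4 * K2 + 10 * sqrt (2 / \<kappa>)) / sqrt R"
      using sqrtR0 k by (intro divide_right_mono) auto
    finally show ?thesis by (simp add: R_def)
  next
    case False
    then have "(f2 a)^2 \<ge> \<kappa>^2 * R^2/2" using fr by auto
    moreover have "(7/10 * (\<kappa> * R))^2 = 49/100 * (\<kappa>^2 * R^2)" by (simp add: power2_eq_square)
    moreover have "\<kappa>^2 * R^2 \<ge> 0" by simp
    ultimately have "(7/10 * (\<kappa> * R))^2 \<le> (f2 a)^2" by linarith
    then have f2a: "\<bar>f2 a\<bar> \<ge> 7/10 * (\<kappa> * R)" using R0 k
      by (metis abs_of_nonneg power2_le_imp_le abs_ge_zero power2_abs mult_nonneg_nonneg less_imp_le zero_le_divide_iff zero_le_numeral)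
    define r where "r = \<kappa> * R / 2"
    have r0: "r > 0" using k R0 by (simp add: r_def)
    have bnd: "10 / sqrt r = 10 * sqrt (2 / \<kappa>) / sqrt R"
      using k R0 by (simp add: r_def real_sqrt_mult real_sqrt_divide field_simps)
    have "norm (integral {a..b} (\<lambda>x. exp (\<i> * of_real (inner \<xi> (g x))))) \<le> 10 / sqrt r"
    proof (cases "f2 a > 0")
      case True
      have pos1: "f2 x \<ge> r" if "x \<in> {a..b}" for x
      proof -
        have "\<bar>f2 x - f2 a\<bar> \<le> (\<kappa> * R) / 5" using near2[OF that] by (simp add: mult.commute)
        then show ?thesis using f2a True unfolding r_def abs_le_iff by linarith
      qed
      show ?thesis using vdc2[OF ab(2) r0 dpsi df cf2 pos1] by simp
    next
      case False
      have pos: "- f2 x \<ge> r" if "x \<in> {a..b}" for x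
      proof -
        have "\<bar>f2 x - f2 a\<bar> \<le> (\<kappa> * R) / 5" using near2[OF that] by (simp add: mult.commute)
        then show ?thesis using f2a False unfolding r_def abs_le_iff by linarith
      qed
      have d1: "((\<lambda>x. - inner \<xi> (g x)) has_real_derivative - f x) (at x within {a..b})" if "x \<in> {a..b}" for x
        using dpsi[OF that] by (rule DERIV_minus)
      have d2: "((\<lambda>x. - f x) has_real_derivative - f2 x) (at x within {a..b})" if "x \<in> {a..b}" for x
        using df[OF that] by (rule DERIV_minus)
      have "norm (integral {a..b} (\<lambda>x. exp (\<i> * of_real (- inner \<xi> (g x))))) \<le> 10 / sqrt r"
      proof -
        have cneg: "continuous_on {a..b} (\<lambda>x. - f2 x)" by (intro continuous_intros cf2)
        show ?thesis using vdc2[OF ab(2) r0 d1 d2 cneg pos] by simp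
      qed
      moreover have "integral {a..b} (\<lambda>x. exp (\<i> * of_real (- inner \<xi> (g x))))
          = cnj (integral {a..b} (\<lambda>x. exp (\<i> * of_real (inner \<xi> (g x)))))"
        by (simp add: integral_cnj exp_cnj)
      ultimately show ?thesis by simp
    qed
    also have "\<dots> \<le> (4 + 4 * K2 + 10 * sqrt (2 / \<kappa>)) / sqrt R"
      unfolding bnd using sqrtR0 K2nn by (intro divide_right_mono) auto
    finally show ?thesis by (simp add: R_def)
  qed
qed


lemma osc:
  assumes "smooth_unit_speed_curved g kappa"
  shows "\<exists>C>0. \<forall>\<xi>::real\<times>real. norm \<xi> \<ge> 1 \<longrightarrow> (\<forall>s t. 0 \<le> s \<longrightarrow> s \<le> t \<longrightarrow> t \<le> 1 \<longrightarrow>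
     norm (integral {s..t} (\<lambda>x. exp (\<i> * of_real (inner \<xi> (g x))))) \<le> C / sqrt (norm \<xi>))"
proof -
  obtain D :: "nat \<Rightarrow> real \<Rightarrow> real \<times> real" where k: "kappa > 0" and D0: "D 0 = g"
    and dD: "\<And>k t. t \<in> {0..1} \<Longrightarrow> (D k has_vector_derivative D (Suc k) t) (at t within {0..1})"
    and unit: "\<And>t. t \<in> {0..1} \<Longrightarrow> norm (D 1 t) = 1"
    and curv: "\<And>t. t \<in> {0..1} \<Longrightarrow> norm (D 2 t) \<ge> kappa"
    using assms unfolding smooth_unit_speed_curved_def by blast
  have dg: "\<And>x. x \<in> {0..1} \<Longrightarrow> (g has_vector_derivative D 1 x) (at x within {0..1})"
    using dD[of _ 0] D0 by simp
  have dD1: "\<And>x. x \<in> {0..1} \<Longrightarrow> (D 1 has_vector_derivative D 2 x) (at x within {0..1})"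
    using dD[of _ 1] by (simp add: numeral_2_eq_2)
  have dD2: "\<And>x. x \<in> {0..1} \<Longrightarrow> (D 2 has_vector_derivative D 3 x) (at x within {0..1})"
    using dD[of _ 2] by (simp add: numeral_3_eq_3 numeral_2_eq_2)
  have cg: "continuous_on {0..1} g" using dg continuous_on_vector_derivative by blast
  have cD1: "continuous_on {0..1} (D 1)" using dD1 continuous_on_vector_derivative by blast
  have cD2: "continuous_on {0..1} (D 2)" using dD2 continuous_on_vector_derivative by blast
  have orth: "inner (D 1 x) (D 2 x) = 0" if x: "x \<in> {0..1}" for x
  proof -
    have h1: "((\<lambda>x. inner (D 1 x) (D 1 x)) has_vector_derivative
               (inner (D 1 x) (D 2 x) + inner (D 2 x) (D 1 x))) (at x within {0..1})"
      by (rule bounded_bilinear.has_vector_derivative[OF bounded_bilinear_inner dD1[OF x] dD1[OF x]])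
    have h0: "((\<lambda>x. inner (D 1 x) (D 1 x)) has_vector_derivative 0) (at x within {0..1})"
    proof (rule has_vector_derivative_transform[OF x])
      show "((\<lambda>x. 1::real) has_vector_derivative 0) (at x within {0..1})" by simp
      show "inner (D 1 y) (D 1 y) = 1" if "y \<in> {0..1}" for y
        using unit[OF that] by (simp add: power2_norm_eq_inner[symmetric])
    qed
    have "inner (D 1 x) (D 2 x) + inner (D 2 x) (D 1 x) = 0"
      using vector_derivative_unique_within_closed_interval[of 0 1 x, OF _ _ h1[unfolded cbox_interval[symmetric]] h0[unfolded cbox_interval[symmetric]]] x
      by simp
    then show ?thesis by (simp add: inner_commute)
  qed
  obtain K2 where K2: "K2 > 0" "\<And>x. x \<in> {0..1} \<Longrightarrow> norm (D 2 x) \<le> K2"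
    using compact_imp_bounded[OF compact_continuous_image[OF cD2 compact_Icc]]
    unfolding bounded_pos by auto
  have uc1: "uniformly_continuous_on {0..1} (D 1)" by (rule compact_uniformly_continuous[OF cD1 compact_Icc])
  have uc2: "uniformly_continuous_on {0..1} (D 2)" by (rule compact_uniformly_continuous[OF cD2 compact_Icc])
  have e1: "(1/5::real) > 0" by simp
  have e2: "kappa/5 > 0" using k by simp
  obtain h1 where h1: "h1 > 0" "\<forall>x\<in>{0..1}. \<forall>y\<in>{0..1}. dist y x < h1 \<longrightarrow> dist (D 1 y) (D 1 x) < 1/5"
    using uc1[unfolded uniformly_continuous_on_def, rule_format, OF e1] by blast
  obtain h2 where h2: "h2 > 0" "\<forall>x\<in>{0..1}. \<forall>y\<in>{0..1}. dist y x < h2 \<longrightarrow> dist (D 2 y) (D 2 x) < kappa/5"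
    using uc2[unfolded uniformly_continuous_on_def, rule_format, OF e2] by blast
  define h where "h = min h1 h2"
  have h0: "h > 0" using h1 h2 by (simp add: h_def)
  define C0 where "C0 = 4 + 4 * K2 + 10 * sqrt (2 / kappa)"
  have C00: "C0 > 0" using K2 k by (simp add: C0_def add_pos_nonneg)
  define n :: nat where "n = nat \<lfloor>1/h\<rfloor> + 1"
  have n1: "real n > 1/h" unfolding n_def by linarith
  have npos: "n > 0" by (simp add: n_def)
  show ?thesis
  proof (intro exI[of _ "real n * C0"] conjI allI impI)
    show "real n * C0 > 0" using npos C00 by simp
    fix \<xi> :: "real \<times> real" and s t :: real
    assume R1: "norm \<xi> \<ge> 1" and st: "0 \<le> s" "s \<le> t" "t \<le> 1"
    define E where "E = (\<lambda>x. exp (\<i> * of_real (inner \<xi> (g x))))"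
    have cE: "continuous_on {0..1} E" unfolding E_def by (intro continuous_intros cg)
    define d where "d = (t - s) / n"
    have d0: "d \<ge> 0" using st npos by (simp add: d_def)
    have dh: "d < h"
    proof -
      have "d \<le> 1 / n" using st npos by (simp add: d_def divide_right_mono)
      also have "\<dots> < h" using n1 h0 npos by (simp add: field_simps)
      finally show ?thesis .
    qed
    have nd: "s + real n * d = t" using npos by (simp add: d_def)
    have "k \<le> n \<longrightarrow> norm (integral {s..s + real k * d} E) \<le> real k * C0 / sqrt (norm \<xi>)" for k
    proof (induction k)
      case 0 then show ?case by simp
    next
      case (Suc k)
      show ?case
      proof
        assume kn: "Suc k \<le> n"
        have le1: "s + real (Suc k) * d \<le> 1"
        proof -
          have "real (Suc k) * d \<le> real n * d" using kn d0 by (intro mult_right_mono) auto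
          then show ?thesis using nd st by linarith
        qed
        have a0: "0 \<le> s + real k * d" using st d0 by simp
        have ab: "s + real k * d \<le> s + real (Suc k) * d" using d0 by (simp add: algebra_simps)
        have sub: "{s..s + real (Suc k) * d} \<subseteq> {0..1}" using st le1 by auto
        have iE: "E integrable_on {s..s + real (Suc k) * d}"
          by (rule integrable_continuous_real[OF continuous_on_subset[OF cE sub]])
        have split: "integral {s..s + real (Suc k) * d} E = integral {s..s + real k * d} E + integral {s + real k * d..s + real (Suc k) * d} E"
          using Henstock_Kurzweil_Integration.integral_combine[OF _ ab iE] d0 by simp
        have loc: "norm (integral {s + real k * d..s + real (Suc k) * d} E) \<le> C0 / sqrt (norm \<xi>)"
          unfolding E_def C0_def
        proof (rule local_bound[OF dg dD1 cD2 unit orth k curv K2(2) a0 ab le1 _ _ R1])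
          fix x assume x: "x \<in> {s + real k * d..s + real (Suc k) * d}"
          have xa: "dist x (s + real k * d) < h" using x dh by (auto simp: dist_real_def algebra_simps)
          have x01: "x \<in> {0..1}" "s + real k * d \<in> {0..1}" using x sub a0 ab le1 by auto
          show "norm (D 1 x - D 1 (s + real k * d)) \<le> 1/5"
            using h1(2)[rule_format, OF x01(2) x01(1)] xa by (simp add: h_def dist_norm)
          show "norm (D 2 x - D 2 (s + real k * d)) \<le> kappa/5"
            using h2(2)[rule_format, OF x01(2) x01(1)] xa by (simp add: h_def dist_norm)
        qed
        have "norm (integral {s..s + real (Suc k) * d} E) \<le> real k * C0 / sqrt (norm \<xi>) + C0 / sqrt (norm \<xi>)"
          using split loc Suc.IH kn norm_triangle_ineq[of "integral {s..s + real k * d} E" "integral {s + real k * d..s + real (Suc k) * d} E"]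
          by simp
        also have "\<dots> = real (Suc k) * C0 / sqrt (norm \<xi>)" by (simp add: add_divide_distrib algebra_simps)
        finally show "norm (integral {s..s + real (Suc k) * d} E) \<le> real (Suc k) * C0 / sqrt (norm \<xi>)" .
      qed
    qed
    from this[of n] show "norm (integral {s..t} (\<lambda>x. exp (\<i> * of_real (inner \<xi> (g x))))) \<le> real n * C0 / sqrt (norm \<xi>)"
      using nd by (simp add: E_def)
  qed
qed


lemma smooth_cont:
  assumes "smooth_unit_speed_curved g kappa"
  shows "continuous_on {0..1} g"
proof -
  obtain D :: "nat \<Rightarrow> real \<Rightarrow> real \<times> real" where D0: "D 0 = g"
    and dD: "\<And>k t. t \<in> {0..1} \<Longrightarrow> (D k has_vector_derivative D (Suc k) t) (at t within {0..1})"
    using assms unfolding smooth_unit_speed_curved_def by blast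
  have "\<And>x. x \<in> {0..1} \<Longrightarrow> (g has_vector_derivative D 1 x) (at x within {0..1})"
    using dD[of _ 0] D0 by simp
  then show ?thesis using continuous_on_vector_derivative by blast
qed

definition xi :: "int \<times> int \<Rightarrow> int \<times> int \<Rightarrow> real \<times> real" where
  "xi mu nu = (2 * pi * real_of_int (fst mu - fst nu), 2 * pi * real_of_int (snd mu - snd nu))"

lemma norm_xi: "norm (xi mu nu) = 2 * pi * lat_dist mu nu"
proof -
  have "norm (xi mu nu) = sqrt ((2 * pi)^2 * (real_of_int (fst mu - fst nu)^2 + real_of_int (snd mu - snd nu)^2))"
    unfolding xi_def norm_Pair by (simp add: power2_eq_square algebra_simps)
  also have "\<dots> = 2 * pi * sqrt (real_of_int (fst mu - fst nu)^2 + real_of_int (snd mu - snd nu)^2)"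
    by (simp add: real_sqrt_mult)
  finally show ?thesis unfolding lat_dist_def by simp
qed

lemma lat_dist_ge1:
  assumes "mu \<noteq> nu" shows "lat_dist mu nu \<ge> 1"
proof -
  have "(fst mu - fst nu)^2 + (snd mu - snd nu)^2 \<noteq> (0::int)"
    using assms by (auto simp: prod_eq_iff power2_eq_square add_nonneg_eq_0_iff)
  moreover have "(fst mu - fst nu)^2 + (snd mu - snd nu)^2 \<ge> (0::int)" by simp
  ultimately have "(fst mu - fst nu)^2 + (snd mu - snd nu)^2 \<ge> (1::int)" by linarith
  then have "real_of_int ((fst mu - fst nu)^2 + (snd mu - snd nu)^2) \<ge> 1" by linarith
  then show ?thesis unfolding lat_dist_def by simp
qed

lemma w_prod:
  "exp (2 * of_real pi * \<i> * of_real (lat_inner mu y)) * cnj (exp (2 * of_real pi * \<i> * of_real (lat_inner nu y)))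
     = exp (\<i> * of_real (inner (xi mu nu) y))"
proof -
  have cj: "cnj (exp (2 * of_real pi * \<i> * of_real (lat_inner nu y))) = exp (- (2 * of_real pi * \<i> * of_real (lat_inner nu y)))"
    by (simp add: exp_cnj)
  have "exp (2 * of_real pi * \<i> * of_real (lat_inner mu y)) * cnj (exp (2 * of_real pi * \<i> * of_real (lat_inner nu y)))
      = exp (2 * of_real pi * \<i> * of_real (lat_inner mu y) + - (2 * of_real pi * \<i> * of_real (lat_inner nu y)))"
    unfolding cj by (rule exp_add[symmetric])
  also have "2 * of_real pi * \<i> * of_real (lat_inner mu y) + - (2 * of_real pi * \<i> * of_real (lat_inner nu y))
      = \<i> * of_real (inner (xi mu nu) y)"
  proof -
    have eq: "inner (xi mu nu) y = 2 * pi * (lat_inner mu y - lat_inner nu y)"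
      by (simp add: xi_def lat_inner_def inner_prod_def algebra_simps)
    show ?thesis unfolding eq by (simp add: algebra_simps)
  qed
  finally show ?thesis .
qed

lemma sq_expand:
  fixes a w :: "'k \<Rightarrow> complex"
  shows "(cmod (\<Sum>mu\<in>A. a mu * w mu))^2 = Re (\<Sum>mu\<in>A. \<Sum>nu\<in>A. a mu * cnj (a nu) * (w mu * cnj (w nu)))"
proof -
  have "complex_of_real ((cmod (\<Sum>mu\<in>A. a mu * w mu))^2) = (\<Sum>mu\<in>A. a mu * w mu) * cnj (\<Sum>mu\<in>A. a mu * w mu)"
    by (rule complex_norm_square)
  also have "\<dots> = (\<Sum>mu\<in>A. a mu * w mu) * (\<Sum>nu\<in>A. cnj (a nu) * cnj (w nu))" by simp
  also have "\<dots> = (\<Sum>mu\<in>A. \<Sum>nu\<in>A. (a mu * w mu) * (cnj (a nu) * cnj (w nu)))" by (rule sum_product)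
  also have "\<dots> = (\<Sum>mu\<in>A. \<Sum>nu\<in>A. a mu * cnj (a nu) * (w mu * cnj (w nu)))" by (simp add: mult_ac)
  finally show ?thesis by (metis Re_complex_of_real)
qed

lemma amgm_sum:
  fixes x :: "'k \<Rightarrow> real"
  assumes "finite A"
  shows "(\<Sum>mu\<in>A. \<Sum>nu\<in>A. x mu * x nu) \<le> real (card A) * (\<Sum>mu\<in>A. (x mu)^2)"
proof -
  have "(\<Sum>mu\<in>A. \<Sum>nu\<in>A. x mu * x nu) \<le> (\<Sum>mu\<in>A. \<Sum>nu\<in>A. (x mu)^2 / 2 + (x nu)^2 / 2)"
  proof (intro sum_mono)
    fix mu nu
    have "0 \<le> (x mu - x nu)^2" by simp
    then show "x mu * x nu \<le> (x mu)^2 / 2 + (x nu)^2 / 2" by (simp add: power2_eq_square algebra_simps)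
  qed
  also have "\<dots> = (\<Sum>mu\<in>A. real (card A) * (x mu)^2 / 2 + (\<Sum>nu\<in>A. (x nu)^2) / 2)"
    by (simp add: sum.distrib sum_divide_distrib)
  also have "\<dots> = real (card A) * (\<Sum>mu\<in>A. (x mu)^2)"
    by (simp add: sum.distrib sum_divide_distrib[symmetric] sum_distrib_left[symmetric])
  finally show ?thesis .
qed

lemma final_ineq:
  fixes C c eps lam :: real
  assumes C: "C > 0" and c: "c > 0" and e: "eps > 0" and l: "lam > 0"
    and L0: "ln lam > 0"
    and LK: "ln lam \<ge> (2 * C / sqrt (2 * pi * c)) powr (2 / eps)"
  shows "C / sqrt (2 * pi * (c * lam / ln lam powr (3/2 + eps)))
          \<le> (1/2) * (lam powr (-1/2) * ln lam powr (3/4 + eps))"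
proof -
  define L where "L = ln lam"
  define K where "K = 2 * C / sqrt (2 * pi * c)"
  have K0: "K > 0" using C c by (simp add: K_def)
  have L0': "L > 0" using L0 by (simp add: L_def)
  have KL: "K \<le> L powr (eps / 2)"
  proof -
    have "(K powr (2 / eps)) powr (eps / 2) \<le> L powr (eps / 2)"
      using LK e K0 by (intro powr_mono2) (auto simp: K_def L_def)
    moreover have "(K powr (2 / eps)) powr (eps / 2) = K" using e K0 by (simp add: powr_powr)
    ultimately show ?thesis by simp
  qed
  have s1: "sqrt (L powr (3/2 + eps)) = L powr (3/4 + eps/2)"
    using powr_half_sqrt_powr[of L "3/2 + eps"] L0' by (simp add: add_divide_distrib)
  have s2: "lam powr (-1/2) = 1 / sqrt lam"
  proof -
    have "lam powr (-1/2) = lam powr (-(1/2))" by simp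
    also have "\<dots> = inverse (lam powr (1/2))" by (rule powr_minus)
    also have "\<dots> = inverse (sqrt lam)" by (simp only: powr_half_sqrt[OF less_imp_le[OF l]])
    also have "\<dots> = 1 / sqrt lam" by (simp add: divide_inverse)
    finally show ?thesis .
  qed
  have s3: "L powr (3/4 + eps) = L powr (3/4 + eps/2) * L powr (eps/2)"
    by (simp add: powr_add[symmetric] add.commute)
  have P0: "L powr (3/4 + eps/2) > 0" using L0' by simp
  have lhs: "C / sqrt (2 * pi * (c * lam / L powr (3/2 + eps))) = (C / sqrt (2 * pi * c)) * L powr (3/4 + eps/2) / sqrt lam"
    using c l L0' s1 by (simp add: real_sqrt_mult real_sqrt_divide field_simps)
  have KK: "K = 2 * (C / sqrt (2 * pi * c))" unfolding K_def by simp
  have "(C / sqrt (2 * pi * c)) \<le> (1/2) * L powr (eps/2)" using KL unfolding KK by linarith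
  then have "(C / sqrt (2 * pi * c)) * L powr (3/4 + eps/2) / sqrt lam \<le> ((1/2) * L powr (eps/2)) * L powr (3/4 + eps/2) / sqrt lam"
    using P0 l by (intro divide_right_mono mult_right_mono) auto
  also have "\<dots> = (1/2) * (lam powr (-1/2) * L powr (3/4 + eps))"
    unfolding s2 s3 by simp
  finally show ?thesis unfolding lhs[unfolded L_def] by (simp add: L_def)
qed


theorem lemma5p4:
  fixes g :: "real \<Rightarrow> real \<times> real" and kappa eps c :: real
  assumes "smooth_unit_speed_curved g kappa"
    and "eps > 0" and "c > 0"
  shows "\<exists>M. \<forall>m::nat. \<forall>a :: int \<times> int \<Rightarrow> complex. \<forall>s t :: real.
     m \<ge> M \<longrightarrow>
     (\<forall>mu\<in>Elam m. \<forall>nu\<in>Elam m. mu \<noteq> nu \<longrightarrow>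
         lat_dist mu nu \<ge> c * lam m / ln (lam m) powr (3/2 + eps)) \<longrightarrow>
     (\<Sum>mu\<in>Elam m. (cmod (a mu))^2) = 1 \<longrightarrow>
     0 \<le> s \<longrightarrow> s < t \<longrightarrow> t \<le> 1 \<longrightarrow>
     t - s > lam m powr (-1/2) * ln (lam m) powr (3/4 + eps) * real (card (Elam m)) \<longrightarrow>
     integral {s..t} (\<lambda>x. (cmod (Phi m a (g x)))^2) / (t - s) \<ge> 1/2"
proof -
  note e = assms(2) and c = assms(3)
  obtain C where C0: "C > 0" and Cb: "\<And>\<xi> s t. norm \<xi> \<ge> 1 \<Longrightarrow> 0 \<le> s \<Longrightarrow> s \<le> t \<Longrightarrow> t \<le> 1 \<Longrightarrow>
      norm (integral {s..t} (\<lambda>x. exp (\<i> * of_real (inner \<xi> (g x))))) \<le> C / sqrt (norm \<xi>)"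
    using osc[OF assms(1)] by blast
  have cg: "continuous_on {0..1} g" by (rule smooth_cont[OF assms(1)])
  define K where "K = 2 * C / sqrt (2 * pi * c)"
  define T where "T = max 1 (K powr (2 / eps))"
  define M where "M = nat \<lceil>(exp T)^2\<rceil>"
  show ?thesis
  proof (intro exI[of _ M] allI impI)
    fix m :: nat and a :: "int \<times> int \<Rightarrow> complex" and s t :: real
    assume mM: "M \<le> m"
      and sep: "\<forall>mu\<in>Elam m. \<forall>nu\<in>Elam m. mu \<noteq> nu \<longrightarrow> lat_dist mu nu \<ge> c * lam m / ln (lam m) powr (3/2 + eps)"
      and nrm: "(\<Sum>mu\<in>Elam m. (cmod (a mu))^2) = 1"
      and s0: "0 \<le> s" and st: "s < t" and t1: "t \<le> 1"
      and len: "t - s > lam m powr (-1/2) * ln (lam m) powr (3/4 + eps) * real (card (Elam m))"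
    define E where "E = Elam m"
    define N where "N = card E"
    define l where "l = lam m"
    define L where "L = ln l"
    have fin: "finite E"
    proof (rule ccontr)
      assume "\<not> finite E"
      then have "(\<Sum>mu\<in>Elam m. (cmod (a mu))^2) = 0" by (simp add: E_def)
      then show False using nrm by simp
    qed
    have mbig: "real m \<ge> (exp T)^2"
    proof -
      have "(exp T)^2 \<le> real_of_int \<lceil>(exp T)^2\<rceil>" by (rule le_of_int_ceiling)
      also have "\<dots> = real M" unfolding M_def by simp
      also have "\<dots> \<le> real m" using mM by simp
      finally show ?thesis .
    qed
    have lT: "l \<ge> exp T"
    proof -
      have "exp T = sqrt ((exp T)^2)" by simp
      also have "\<dots> \<le> sqrt (real m)" using mbig by (rule real_sqrt_le_mono)
      also have "\<dots> \<le> 2 * pi * sqrt (real m)"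
      proof -
        have "1 * sqrt (real m) \<le> (2 * pi) * sqrt (real m)"
          using pi_gt3 by (intro mult_right_mono) auto
        then show ?thesis by simp
      qed
      finally show ?thesis by (simp add: l_def lam_def)
    qed
    have l0: "l > 0" using lT by (smt (verit) exp_gt_zero)
    have LT: "L \<ge> T"
    proof -
      have "ln (exp T) \<le> ln l" using lT l0 by (subst ln_le_cancel_iff) auto
      then show ?thesis by (simp add: L_def)
    qed
    have L1: "L \<ge> 1" using LT by (simp add: T_def)
    have LK: "L \<ge> K powr (2 / eps)" using LT by (simp add: T_def)
    define B where "B = C / sqrt (2 * pi * (c * l / L powr (3/2 + eps)))"
    have B0: "B \<ge> 0" using C0 c l0 L1 by (simp add: B_def)
    have Bfin: "B \<le> (1/2) * (l powr (-1/2) * L powr (3/4 + eps))"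
      unfolding B_def L_def
      by (rule final_ineq[OF C0 c e l0]) (use L1 LK in \<open>auto simp: L_def K_def\<close>)
    define I where "I mu nu = integral {s..t} (\<lambda>x. exp (\<i> * of_real (inner (xi mu nu) (g x))))" for mu nu
    have sub: "{s..t} \<subseteq> {0..1}" using s0 t1 by auto
    have hasI: "((\<lambda>x. exp (\<i> * of_real (inner (xi mu nu) (g x)))) has_integral I mu nu) {s..t}" for mu nu
    proof -
      have "continuous_on {s..t} (\<lambda>x. exp (\<i> * of_real (inner (xi mu nu) (g x))))"
        by (intro continuous_intros continuous_on_subset[OF cg sub])
      then show ?thesis unfolding I_def using integrable_continuous_real by blast
    qed
    have Ibound: "norm (I mu nu) \<le> B" if "mu \<in> E" "nu \<in> E" "mu \<noteq> nu" for mu nu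
    proof -
      have d1: "lat_dist mu nu \<ge> 1" using lat_dist_ge1[OF that(3)] .
      have d2: "lat_dist mu nu \<ge> c * l / L powr (3/2 + eps)"
        using sep that by (simp add: E_def l_def L_def)
      have n1: "norm (xi mu nu) \<ge> 1" unfolding norm_xi using d1 pi_gt3
        by (smt (verit) mult_le_cancel_left1)
      have "norm (I mu nu) \<le> C / sqrt (norm (xi mu nu))"
        unfolding I_def by (rule Cb[OF n1 s0 less_imp_le[OF st] t1])
      also have "\<dots> \<le> B"
      proof -
        have pos: "0 < 2 * pi * (c * l / L powr (3/2 + eps))" using c l0 L1 by simp
        have "2 * pi * (c * l / L powr (3/2 + eps)) \<le> norm (xi mu nu)"
          unfolding norm_xi by (rule mult_left_mono[OF d2]) simp
        then have "sqrt (2 * pi * (c * l / L powr (3/2 + eps))) \<le> sqrt (norm (xi mu nu))"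
          by (rule real_sqrt_le_mono)
        moreover have "0 < sqrt (norm (xi mu nu)) * sqrt (2 * pi * (c * l / L powr (3/2 + eps)))"
          using pos n1 by (intro mult_pos_pos) auto
        ultimately show ?thesis unfolding B_def using C0
          by (intro divide_left_mono) auto
      qed
      finally show ?thesis .
    qed
    define cf where "cf mu nu = a mu * cnj (a nu)" for mu nu
    define F where "F x = (\<Sum>mu\<in>E. \<Sum>nu\<in>E. cf mu nu * exp (\<i> * of_real (inner (xi mu nu) (g x))))" for x
    have pointwise: "(cmod (Phi m a (g x)))^2 = Re (F x)" for x
    proof -
      have "(cmod (Phi m a (g x)))^2 = Re (\<Sum>mu\<in>E. \<Sum>nu\<in>E. a mu * cnj (a nu) *
          (exp (2 * of_real pi * \<i> * of_real (lat_inner mu (g x))) * cnj (exp (2 * of_real pi * \<i> * of_real (lat_inner nu (g x))))))"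
        unfolding Phi_def E_def by (rule sq_expand)
      then show ?thesis by (simp add: F_def cf_def w_prod)
    qed
    have hasF: "(F has_integral (\<Sum>mu\<in>E. \<Sum>nu\<in>E. cf mu nu * I mu nu)) {s..t}"
      unfolding F_def
      by (intro has_integral_sum fin has_integral_mult_right hasI)
    have hasRe: "((\<lambda>x. (cmod (Phi m a (g x)))^2) has_integral Re (\<Sum>mu\<in>E. \<Sum>nu\<in>E. cf mu nu * I mu nu)) {s..t}"
      using has_integral_linear[OF hasF bounded_linear_Re] by (simp add: o_def pointwise)
    have intval: "integral {s..t} (\<lambda>x. (cmod (Phi m a (g x)))^2) = (\<Sum>mu\<in>E. \<Sum>nu\<in>E. Re (cf mu nu * I mu nu))"
      using integral_unique[OF hasRe] by simp
    have trm: "Re (cf mu nu * I mu nu) \<ge> (if mu = nu then (cmod (a mu))^2 * (t - s) else 0) - cmod (a mu) * cmod (a nu) * B"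
      if "mu \<in> E" "nu \<in> E" for mu nu
    proof (cases "mu = nu")
      case True
      have "xi mu mu = 0" by (simp add: xi_def zero_prod_def)
      then have "I mu mu = of_real (t - s)" unfolding I_def using st by (simp add: scaleR_conv_of_real)
      moreover have "cf mu mu = of_real ((cmod (a mu))^2)" unfolding cf_def by (rule complex_norm_square[symmetric])
      ultimately have "Re (cf mu nu * I mu nu) = (cmod (a mu))^2 * (t - s)" using True by simp
      moreover have "cmod (a mu) * cmod (a nu) * B \<ge> 0" using B0 by simp
      ultimately show ?thesis using True by simp
    next
      case False
      have "- Re (cf mu nu * I mu nu) \<le> cmod (cf mu nu * I mu nu)"
        using abs_Re_le_cmod[of "cf mu nu * I mu nu"] by linarith
      also have "\<dots> = cmod (a mu) * cmod (a nu) * norm (I mu nu)" by (simp add: cf_def norm_mult)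
      also have "\<dots> \<le> cmod (a mu) * cmod (a nu) * B"
        using Ibound[OF that False] by (intro mult_left_mono) auto
      finally show ?thesis using False by simp
    qed
    have "integral {s..t} (\<lambda>x. (cmod (Phi m a (g x)))^2)
        \<ge> (\<Sum>mu\<in>E. \<Sum>nu\<in>E. (if mu = nu then (cmod (a mu))^2 * (t - s) else 0) - cmod (a mu) * cmod (a nu) * B)"
      unfolding intval by (intro sum_mono) (use trm in auto)
    also have "(\<Sum>mu\<in>E. \<Sum>nu\<in>E. (if mu = nu then (cmod (a mu))^2 * (t - s) else 0) - cmod (a mu) * cmod (a nu) * B)
        = (\<Sum>mu\<in>E. (cmod (a mu))^2) * (t - s) - B * (\<Sum>mu\<in>E. \<Sum>nu\<in>E. cmod (a mu) * cmod (a nu))"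
      using fin by (simp add: sum_subtractf sum_distrib_left sum_distrib_right mult_ac)
    also have "(\<Sum>mu\<in>E. (cmod (a mu))^2) = 1" using nrm by (simp add: E_def)
    finally have lower: "integral {s..t} (\<lambda>x. (cmod (Phi m a (g x)))^2)
        \<ge> (t - s) - B * (\<Sum>mu\<in>E. \<Sum>nu\<in>E. cmod (a mu) * cmod (a nu))" by simp
    have am: "(\<Sum>mu\<in>E. \<Sum>nu\<in>E. cmod (a mu) * cmod (a nu)) \<le> real N"
      using amgm_sum[OF fin, of "\<lambda>mu. cmod (a mu)"] nrm by (simp add: N_def E_def)
    have "B * (\<Sum>mu\<in>E. \<Sum>nu\<in>E. cmod (a mu) * cmod (a nu)) \<le> B * real N"
      using am B0 by (rule mult_left_mono)
    also have "\<dots> \<le> (1/2) * (l powr (-1/2) * L powr (3/4 + eps)) * real N"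
      using Bfin by (intro mult_right_mono) auto
    also have "\<dots> < (1/2) * (t - s)"
      using len by (simp add: l_def L_def N_def E_def)
    finally have small: "B * (\<Sum>mu\<in>E. \<Sum>nu\<in>E. cmod (a mu) * cmod (a nu)) < (1/2) * (t - s)" .
    have aux: "\<And>X Z D::real. X < (1/2) * D \<Longrightarrow> D - X \<le> Z \<Longrightarrow> (1/2) * D \<le> Z" by linarith
    have "integral {s..t} (\<lambda>x. (cmod (Phi m a (g x)))^2) \<ge> (1/2) * (t - s)"
      by (rule aux[OF small lower])
    then show "integral {s..t} (\<lambda>x. (cmod (Phi m a (g x)))^2) / (t - s) \<ge> 1/2"
      using st by (simp add: pos_le_divide_eq)
  qed
qed

end
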